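(* For every $\lambda\in\mathcal{P}^+$, $$D\,m_\lambda=\big(\langle\lambda+\rho_g,\lambda+\rho_g\rangle-\langle\rho_g,\rho_g\rangle\big)m_\lambda+\frac{1}{|W_\lambda|}\sum_{\alpha\in R^+}\Big(g_\alpha\langle\lambda,\alpha\rangle\sum_{\ell=1}^{[\langle\lambda,\alpha^\vee\rangle/2]}|W_{\lambda-\ell\alpha}|\,|W^\alpha(\lambda-\ell\alpha)|\,m_{\lambda-\ell\alpha}\Big),$$ where $|W^\alpha(\lambda-\ell\alpha)|$ equals $1$ if $\ell=\langle\lambda,\alpha^\vee\rangle/2$ and $2$ otherwise.
   Context: $E$ is a real Euclidean space (inner product $\langle\cdot,\cdot\rangle$, dimension $N$) spanned by an irreducible, not necessarily reduced, root system $R$ with Weyl group $W$ and positive roots $R^+$; $\alpha^\vee=2\alpha/\langle\alpha,\alpha\rangle$. $\mathcal{P}$ is the weight lattice, $\mathcal{P}^+$ the dominant weights. Formal exponentials $e^\lambda$ ($\lambda\in\mathcal{P}$), $e^\lambda e^\mu=e^{\lambda+\mu}$, realized as functions $e^{i\langle\lambda,x\rangle}$; $m_\lambda=\sum_{\mu\in W(\lambda)}e^\mu$. For $x\in E$, $\partial_x$ is the derivation with $\partial_x e^\lambda=\langle\lambda,x\rangle e^\lambda$; $\partial_\alpha$ means $\partial_x$ with $x=\alpha$. Parameters $g_\alpha$ ($\alpha\in R$) are real numbers with $g_{w(\alpha)}=g_\alpha$ for all $w\in W$. The hypergeometric differential operator is $D=\sum_{j=1}^N\partial_{x_j}^2+\sum_{\alpha\in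 R^+}g_\alpha\frac{1+e^{-\alpha}}{1-e^{-\alpha}}\partial_\alpha$, with $x_1,\dots,x_N$ an orthonormal basis of $E$. $\rho_g=\frac12\sum_{\alpha\in R^+}g_\alpha\alpha$. $W_\mu=\{w\in W\mid w(\mu)=\mu\}$ is the stabilizer; $W^\alpha\subset W$ is the order-2 subgroup generated by the reflection $r_\alpha(x)=x-\langle x,\alpha^\vee\rangle\alpha$, and $W^\alpha(\mu)$ the $W^\alpha$-orbit of $\mu$. $[p]$ denotes the integral part of a nonnegative real number $p$. *)

theory Defs
  imports "HOL-Analysis.Analysis"
begin

definition coroot :: "'a::euclidean_space \<Rightarrow> 'a" where
  "coroot \<alpha> = (2 / (\<alpha> \<bullet> \<alpha>)) *\<^sub>R \<alpha>"

definition refl :: "'a::euclidean_space \<Rightarrow> 'a \<Rightarrow> 'a" where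
  "refl \<alpha> x = x - (x \<bullet> coroot \<alpha>) *\<^sub>R \<alpha>"

definition root_system :: "'a::euclidean_space set \<Rightarrow> bool" where
  "root_system R \<longleftrightarrow> finite R \<and> 0 \<notin> R \<and> span R = UNIV
     \<and> (\<forall>\<alpha>\<in>R. \<forall>\<beta>\<in>R. refl \<alpha> \<beta> \<in> R)
     \<and> (\<forall>\<alpha>\<in>R. \<forall>\<beta>\<in>R. \<beta> \<bullet> coroot \<alpha> \<in> \<int>)"

definition irreducible_rs :: "'a::euclidean_space set \<Rightarrow> bool" where
  "irreducible_rs R \<longleftrightarrow> \<not> (\<exists>A B. A \<union> B = R \<and> A \<inter> B = {} \<and> A \<noteq> {} \<and> B \<noteq> {}
       \<and> (\<forall>a\<in>A. \<forall>b\<in>B. a \<bullet> b = 0))"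

definition positive_system :: "'a::euclidean_space set \<Rightarrow> 'a set \<Rightarrow> bool" where
  "positive_system R Rp \<longleftrightarrow> (\<exists>v. (\<forall>\<alpha>\<in>R. \<alpha> \<bullet> v \<noteq> 0) \<and> Rp = {\<alpha>\<in>R. \<alpha> \<bullet> v > 0})"

inductive_set weyl_group :: "'a::euclidean_space set \<Rightarrow> ('a \<Rightarrow> 'a) set" for R where
  id: "id \<in> weyl_group R"
| step: "w \<in> weyl_group R \<Longrightarrow> \<alpha> \<in> R \<Longrightarrow> refl \<alpha> \<circ> w \<in> weyl_group R"

definition weight_lattice :: "'a::euclidean_space set \<Rightarrow> 'a set" where
  "weight_lattice R = {lam. \<forall>\<alpha>\<in>R. lam \<bullet> coroot \<alpha> \<in> \<int>}"

definition dominant_weights :: "'a::euclidean_space set \<Rightarrow> 'a set \<Rightarrow> 'a set" where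
  "dominant_weights R Rp = {lam\<in>weight_lattice R. \<forall>\<alpha>\<in>Rp. lam \<bullet> coroot \<alpha> \<ge> 0}"

definition stabilizer :: "'a::euclidean_space set \<Rightarrow> 'a \<Rightarrow> ('a \<Rightarrow> 'a) set" where
  "stabilizer R \<mu> = {w\<in>weyl_group R. w \<mu> = \<mu>}"

definition rho_g :: "'a::euclidean_space set \<Rightarrow> ('a \<Rightarrow> real) \<Rightarrow> 'a" where
  "rho_g Rp g = (1/2) *\<^sub>R (\<Sum>\<alpha>\<in>Rp. g \<alpha> *\<^sub>R \<alpha>)"

text \<open>An element of the group algebra is a finitely supported coefficient function
  p :: 'a => real, standing for sum_mu p(mu) e^mu.  It is realized as the function
  x |-> sum_mu p(mu) exp(i <mu,x>).\<close>

definition expo :: "'a::euclidean_space \<Rightarrow> 'a \<Rightarrow> complex" where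
  "expo lam x = exp (\<i> * complex_of_real (lam \<bullet> x))"

definition ev :: "('a::euclidean_space \<Rightarrow> real) \<Rightarrow> 'a \<Rightarrow> complex" where
  "ev p x = (\<Sum>\<mu>\<in>{\<mu>. p \<mu> \<noteq> 0}. complex_of_real (p \<mu>) * expo \<mu> x)"

text \<open>The derivation partial_y with partial_y e^lambda = <lambda,y> e^lambda.\<close>
definition pd :: "'a::euclidean_space \<Rightarrow> ('a \<Rightarrow> real) \<Rightarrow> ('a \<Rightarrow> real)" where
  "pd y p = (\<lambda>\<mu>. (\<mu> \<bullet> y) * p \<mu>)"

definition orbit_sum :: "'a::euclidean_space set \<Rightarrow> 'a \<Rightarrow> ('a \<Rightarrow> real)" where
  "orbit_sum R lam = (\<lambda>\<mu>. if \<mu> \<in> (\<lambda>w. w lam) ` weyl_group R then 1 else 0)"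

text \<open>The hypergeometric operator D applied to p, realized as a function of x
  (defined where no denominator 1 - e^{-alpha} vanishes).\<close>
definition hyp_D :: "'a::euclidean_space set \<Rightarrow> ('a \<Rightarrow> real) \<Rightarrow> ('a \<Rightarrow> real) \<Rightarrow> 'a \<Rightarrow> complex" where
  "hyp_D Rp g p x =
     (\<Sum>b\<in>Basis. ev (pd b (pd b p)) x)
     + (\<Sum>\<alpha>\<in>Rp. complex_of_real (g \<alpha>) * ((1 + expo (-\<alpha>) x) / (1 - expo (-\<alpha>) x)) * ev (pd \<alpha> p) x)"

end

theory Submission
  imports Defs
begin

lemma coroot_inner_self: "(\<alpha>::'a::euclidean_space) \<noteq> 0 \<Longrightarrow> \<alpha> \<bullet> coroot \<alpha> = 2"
  by (simp add: coroot_def)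

lemma refl_linear: "linear (refl \<alpha>)"
  unfolding refl_def by (intro linearI) (auto simp: inner_add_left algebra_simps)

lemma refl_inner: assumes "(\<alpha>::'a::euclidean_space) \<noteq> 0"
  shows "refl \<alpha> x \<bullet> refl \<alpha> y = x \<bullet> y"
proof -
  have n: "\<alpha> \<bullet> \<alpha> \<noteq> 0" using assms by simp
  show ?thesis unfolding refl_def coroot_def using n
    by (simp add: inner_diff_left inner_diff_right algebra_simps inner_commute)
qed

lemma refl_refl: assumes "(\<alpha>::'a::euclidean_space) \<noteq> 0" shows "refl \<alpha> (refl \<alpha> x) = x"
proof -
  have n: "\<alpha> \<bullet> \<alpha> \<noteq> 0" using assms by simp
  show ?thesis unfolding refl_def coroot_def using n
    by (simp add: inner_diff_left algebra_simps)
qed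

lemma refl_self: assumes "(\<alpha>::'a::euclidean_space) \<noteq> 0" shows "refl \<alpha> \<alpha> = - \<alpha>"
  using assms unfolding refl_def by (simp add: coroot_inner_self) (simp add: algebra_simps scaleR_2)

lemma rs_nz: "root_system R \<Longrightarrow> \<alpha> \<in> R \<Longrightarrow> \<alpha> \<noteq> 0"
  unfolding root_system_def by auto

lemma rs_refl: "root_system R \<Longrightarrow> \<alpha> \<in> R \<Longrightarrow> \<beta> \<in> R \<Longrightarrow> refl \<alpha> \<beta> \<in> R"
  unfolding root_system_def by auto

lemma rs_neg: "root_system R \<Longrightarrow> \<alpha> \<in> R \<Longrightarrow> - \<alpha> \<in> R"
  using rs_refl[of R \<alpha> \<alpha>] refl_self[of \<alpha>] rs_nz by fastforce

lemma W_props: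
  assumes rs: "root_system R" and w: "w \<in> weyl_group R"
  shows "linear w \<and> (\<forall>x y. w x \<bullet> w y = x \<bullet> y) \<and> (\<forall>\<beta>\<in>R. w \<beta> \<in> R)"
  using w
proof induction
  case id
  then show ?case using linear_id unfolding id_def by simp
next
  case (step w \<alpha>)
  have nz: "\<alpha> \<noteq> 0" using rs_nz[OF rs step(2)] .
  have "linear (refl \<alpha> \<circ> w)" using step linear_compose refl_linear by blast
  then show ?case using step refl_inner[OF nz] rs_refl[OF rs step(2)]
    by (auto simp: comp_def)
qed

lemma W_linear: "root_system R \<Longrightarrow> w \<in> weyl_group R \<Longrightarrow> linear w"
  using W_props by blast
lemma W_inner: "root_system R \<Longrightarrow> w \<in> weyl_group R \<Longrightarrow> w x \<bullet> w y = x \<bullet> y"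
  using W_props by blast
lemma W_R: "root_system R \<Longrightarrow> w \<in> weyl_group R \<Longrightarrow> \<beta> \<in> R \<Longrightarrow> w \<beta> \<in> R"
  using W_props by blast

lemma W_comp: assumes "w \<in> weyl_group R" "u \<in> weyl_group R" shows "w \<circ> u \<in> weyl_group R"
  using assms(1)
proof induction
  case id then show ?case using assms(2) by simp
next
  case (step w \<alpha>)
  have "refl \<alpha> \<circ> (w \<circ> u) \<in> weyl_group R" by (rule weyl_group.step[OF step.IH step(2)])
  then show ?case by (metis comp_assoc)
qed

lemma W_refl: "\<alpha> \<in> R \<Longrightarrow> refl \<alpha> \<in> weyl_group R"
  using weyl_group.step[OF weyl_group.id, of \<alpha> R] by simp

lemma W_inv: assumes rs: "root_system R" and w: "w \<in> weyl_group R"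
  shows "\<exists>w'\<in>weyl_group R. w' \<circ> w = id \<and> w \<circ> w' = id"
  using w
proof induction
  case id then show ?case by (intro bexI[of _ id]) (auto intro: weyl_group.id)
next
  case (step w \<alpha>)
  then obtain w' where w': "w' \<in> weyl_group R" "w' \<circ> w = id" "w \<circ> w' = id" by blast
  have nz: "\<alpha> \<noteq> 0" using rs_nz[OF rs step(2)] .
  have rr: "refl \<alpha> \<circ> refl \<alpha> = id" using refl_refl[OF nz] by (simp add: fun_eq_iff)
  have "w' \<circ> refl \<alpha> \<in> weyl_group R" using W_comp[OF w'(1) W_refl[OF step(2)]] .
  moreover have "(w' \<circ> refl \<alpha>) \<circ> (refl \<alpha> \<circ> w) = id"
    by (metis comp_assoc rr w'(2) comp_id)
  moreover have "(refl \<alpha> \<circ> w) \<circ> (w' \<circ> refl \<alpha>) = id"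
    by (metis comp_assoc rr w'(3) comp_id)
  ultimately show ?case by blast
qed

lemma W_image_R: assumes rs: "root_system R" and w: "w \<in> weyl_group R" shows "w ` R = R"
proof -
  have fin: "finite R" using rs unfolding root_system_def by auto
  obtain w' where "w' \<circ> w = id" using W_inv[OF rs w] by blast
  then have "inj w" by (metis inj_on_id inj_on_imageI2)
  then have "inj_on w R" by (rule inj_on_subset) simp
  moreover have "w ` R \<subseteq> R" using W_R[OF rs w] by blast
  ultimately show ?thesis using endo_inj_surj[OF fin, of w] by blast
qed

lemma W_finite: assumes rs: "root_system R" shows "finite (weyl_group R)"
proof -
  have fin: "finite R" and sp: "span R = UNIV" using rs unfolding root_system_def by auto
  have "inj_on (\<lambda>w. restrict w R) (weyl_group R)"
  proof (rule inj_onI)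
    fix w u assume w: "w \<in> weyl_group R" and u: "u \<in> weyl_group R" and e: "restrict w R = restrict u R"
    have "\<And>x. x \<in> R \<Longrightarrow> w x = u x" using e by (metis restrict_apply')
    then have "\<And>y. y \<in> span R \<Longrightarrow> w y = u y"
      using linear_eq_on_span[OF W_linear[OF rs w] W_linear[OF rs u]] by blast
    then show "w = u" using sp by auto
  qed
  moreover have "(\<lambda>w. restrict w R) ` weyl_group R \<subseteq> R \<rightarrow>\<^sub>E R"
    using W_R[OF rs] by auto
  moreover have "finite (R \<rightarrow>\<^sub>E R)" using fin by (simp add: finite_PiE)
  ultimately show ?thesis by (meson finite_imageD finite_subset)
qed

lemma W_reindex_right:
  assumes rs: "root_system R" and r: "r \<in> weyl_group R"
  shows "(\<Sum>w\<in>weyl_group R. F (w \<circ> r)) = (\<Sum>w\<in>weyl_group R. F w)"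
proof -
  obtain r' where r': "r' \<in> weyl_group R" "r' \<circ> r = id" "r \<circ> r' = id" using W_inv[OF rs r] by blast
  have "bij_betw (\<lambda>w. w \<circ> r) (weyl_group R) (weyl_group R)"
  proof (rule bij_betw_imageI)
    show "inj_on (\<lambda>w. w \<circ> r) (weyl_group R)"
      by (rule inj_onI) (metis comp_assoc comp_id r'(3))
    show "(\<lambda>w. w \<circ> r) ` weyl_group R = weyl_group R"
    proof
      show "(\<lambda>w. w \<circ> r) ` weyl_group R \<subseteq> weyl_group R" using W_comp[OF _ r] by blast
      show "weyl_group R \<subseteq> (\<lambda>w. w \<circ> r) ` weyl_group R"
      proof
        fix w assume w: "w \<in> weyl_group R"
        have "w = (w \<circ> r') \<circ> r" by (metis comp_assoc comp_id r'(2))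
        then show "w \<in> (\<lambda>w. w \<circ> r) ` weyl_group R" using W_comp[OF w r'(1)] by blast
      qed
    qed
  qed
  then show ?thesis by (rule sum.reindex_bij_betw)
qed

lemma orbit_stab:
  fixes F :: "'a::euclidean_space \<Rightarrow> 'b::comm_semiring_1"
  assumes rs: "root_system R"
  shows "(\<Sum>w\<in>weyl_group R. F (w \<nu>)) = of_nat (card (stabilizer R \<nu>)) * (\<Sum>\<mu>\<in>(\<lambda>w. w \<nu>) ` weyl_group R. F \<mu>)"
proof -
  have fin: "finite (weyl_group R)" by (rule W_finite[OF rs])
  have fib: "card {w \<in> weyl_group R. w \<nu> = \<mu>} = card (stabilizer R \<nu>)"
    if mu: "\<mu> \<in> (\<lambda>w. w \<nu>) ` weyl_group R" for \<mu>
  proof -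
    obtain w0 where w0: "w0 \<in> weyl_group R" "\<mu> = w0 \<nu>" using mu by blast
    obtain w' where w': "w' \<in> weyl_group R" "w' \<circ> w0 = id" "w0 \<circ> w' = id" using W_inv[OF rs w0(1)] by blast
    have "bij_betw (\<lambda>u. w0 \<circ> u) (stabilizer R \<nu>) {w \<in> weyl_group R. w \<nu> = \<mu>}"
    proof (rule bij_betw_imageI)
      show "inj_on (\<lambda>u. w0 \<circ> u) (stabilizer R \<nu>)"
        by (rule inj_onI) (metis comp_assoc id_comp w'(2))
      show "(\<lambda>u. w0 \<circ> u) ` stabilizer R \<nu> = {w \<in> weyl_group R. w \<nu> = \<mu>}"
      proof
        show "(\<lambda>u. w0 \<circ> u) ` stabilizer R \<nu> \<subseteq> {w \<in> weyl_group R. w \<nu> = \<mu>}"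
          using W_comp[OF w0(1)] w0(2) by (auto simp: stabilizer_def)
        show "{w \<in> weyl_group R. w \<nu> = \<mu>} \<subseteq> (\<lambda>u. w0 \<circ> u) ` stabilizer R \<nu>"
        proof
          fix w assume w: "w \<in> {w \<in> weyl_group R. w \<nu> = \<mu>}"
          have "w = w0 \<circ> (w' \<circ> w)" by (metis comp_assoc id_comp w'(3))
          moreover have "w' \<circ> w \<in> stabilizer R \<nu>"
            using W_comp[OF w'(1)] w w0(2) w'(2) unfolding stabilizer_def
            by (auto simp: fun_eq_iff)
          ultimately show "w \<in> (\<lambda>u. w0 \<circ> u) ` stabilizer R \<nu>" by blast
        qed
      qed
    qed
    then show ?thesis by (simp add: bij_betw_same_card)
  qed
  have "(\<Sum>w\<in>weyl_group R. F (w \<nu>)) = (\<Sum>\<mu>\<in>(\<lambda>w. w \<nu>) ` weyl_group R. \<Sum>w\<in>{w \<in> weyl_group R. w \<nu> = \<mu>}. F (w \<nu>))"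
    by (rule sum.image_gen[OF fin])
  also have "\<dots> = (\<Sum>\<mu>\<in>(\<lambda>w. w \<nu>) ` weyl_group R. of_nat (card (stabilizer R \<nu>)) * F \<mu>)"
  proof (rule sum.cong[OF refl])
    fix \<mu> assume mu: "\<mu> \<in> (\<lambda>w. w \<nu>) ` weyl_group R"
    have "(\<Sum>w\<in>{w \<in> weyl_group R. w \<nu> = \<mu>}. F (w \<nu>)) = (\<Sum>w\<in>{w \<in> weyl_group R. w \<nu> = \<mu>}. F \<mu>)"
      by (rule sum.cong) auto
    also have "\<dots> = of_nat (card (stabilizer R \<nu>)) * F \<mu>" using fib[OF mu] by simp
    finally show "(\<Sum>w\<in>{w \<in> weyl_group R. w \<nu> = \<mu>}. F (w \<nu>)) = of_nat (card (stabilizer R \<nu>)) * F \<mu>" .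
  qed
  also have "\<dots> = of_nat (card (stabilizer R \<nu>)) * (\<Sum>\<mu>\<in>(\<lambda>w. w \<nu>) ` weyl_group R. F \<mu>)"
    by (simp add: sum_distrib_left)
  finally show ?thesis .
qed

lemma stab_pos: "root_system R \<Longrightarrow> card (stabilizer R \<nu>) > 0"
  using W_finite[of R] weyl_group.id[of R] unfolding stabilizer_def
  by (metis (mono_tags, lifting) card_gt_0_iff empty_iff finite_subset id_apply mem_Collect_eq subsetI)

lemma ev_superset: "finite S \<Longrightarrow> {\<mu>. p \<mu> \<noteq> 0} \<subseteq> S \<Longrightarrow> ev p x = (\<Sum>\<mu>\<in>S. complex_of_real (p \<mu>) * expo \<mu> x)"
  unfolding ev_def by (rule sum.mono_neutral_left) auto

lemma orbit_finite: "root_system R \<Longrightarrow> finite ((\<lambda>w. w \<nu>) ` weyl_group R)"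
  using W_finite by blast

lemma ev_orbit: "root_system R \<Longrightarrow> ev (orbit_sum R \<nu>) x = (\<Sum>\<mu>\<in>(\<lambda>w. w \<nu>) ` weyl_group R. expo \<mu> x)"
  by (subst ev_superset[of "(\<lambda>w. w \<nu>) ` weyl_group R"])
     (auto simp: orbit_finite orbit_sum_def intro!: sum.cong)

lemma ev_pd_orbit: "root_system R \<Longrightarrow> ev (pd y (orbit_sum R \<nu>)) x =
   (\<Sum>\<mu>\<in>(\<lambda>w. w \<nu>) ` weyl_group R. complex_of_real (\<mu> \<bullet> y) * expo \<mu> x)"
  by (subst ev_superset[of "(\<lambda>w. w \<nu>) ` weyl_group R"])
     (auto simp: orbit_finite orbit_sum_def pd_def intro!: sum.cong)

lemma ev_pd2_orbit: "root_system R \<Longrightarrow> ev (pd y (pd y (orbit_sum R \<nu>))) x =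
   (\<Sum>\<mu>\<in>(\<lambda>w. w \<nu>) ` weyl_group R. complex_of_real ((\<mu> \<bullet> y) * (\<mu> \<bullet> y)) * expo \<mu> x)"
  by (subst ev_superset[of "(\<lambda>w. w \<nu>) ` weyl_group R"])
     (auto simp: orbit_finite orbit_sum_def pd_def intro!: sum.cong)

lemma expo_add: "expo (a + b) x = expo a x * expo b x"
  unfolding expo_def by (simp add: inner_add_left distrib_left exp_add)

lemma expo_zero: "expo 0 x = 1"
  unfolding expo_def by simp

lemma expo_ne0: "expo a x \<noteq> 0"
  unfolding expo_def by simp

lemma expo_neg: "expo (-a) x * expo a x = 1"
  using expo_add[of "-a" a x] by (simp add: expo_zero)

lemma expo_diff_nat: "expo (a - real k *\<^sub>R b) x = expo a x * expo (-b) x ^ k"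
proof -
  have "expo (a - real k *\<^sub>R b) x = expo a x * expo (real k *\<^sub>R (-b)) x"
    using expo_add[of a "real k *\<^sub>R (-b)" x] by simp
  also have "expo (real k *\<^sub>R (-b)) x = expo (-b) x ^ k"
    unfolding expo_def by (simp add: exp_of_nat_mult[symmetric] mult_ac)
  finally show ?thesis .
qed

definition cfun :: "'a::euclidean_space \<Rightarrow> 'a \<Rightarrow> complex" where
  "cfun x \<alpha> = (1 + expo (-\<alpha>) x) / (1 - expo (-\<alpha>) x)"

lemma cfun_neg: assumes "expo (-\<alpha>) x \<noteq> 1" shows "cfun x (-\<alpha>) = - cfun x \<alpha>"
proof -
  define q where "q = expo (-\<alpha>) x"
  have q1: "q \<noteq> 1" using assms q_def by simp
  have q0: "q \<noteq> 0" using expo_ne0 q_def by simp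
  have e: "expo \<alpha> x = 1 / q" using expo_neg[of \<alpha> x] q0 unfolding q_def by (simp add: field_simps)
  have "1 - q \<noteq> 0" "q - 1 \<noteq> 0" using q1 by auto
  have "cfun x (-\<alpha>) = (1 + 1/q) / (1 - 1/q)" unfolding cfun_def using e by simp
  also have "\<dots> = - ((1 + q) / (1 - q))"
  proof -
    have a: "1 + 1/q = (q + 1) / q" using q0 by (simp add: add_divide_distrib)
    have b: "1 - 1/q = (q - 1) / q" using q0 by (simp add: diff_divide_distrib)
    have "(1 + 1/q) / (1 - 1/q) = (q + 1) / (q - 1)" unfolding a b using q0 by simp
    also have "\<dots> = - ((1 + q) / (1 - q))"
      by (metis add.commute minus_diff_eq minus_divide_right)
    finally show ?thesis .
  qed
  finally have l: "cfun x (-\<alpha>) = - ((1 + q) / (1 - q))" .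
  have r: "cfun x \<alpha> = (1 + q) / (1 - q)" unfolding cfun_def q_def by (rule refl)
  show ?thesis unfolding l r by (rule refl)
qed

lemma geo_aux: "(1 + q) * (1 - q ^ Suc n) = (1 - q) * (1 + q ^ Suc n + 2 * (\<Sum>j\<in>{1..<Suc n}. q ^ j))"
  for q :: complex
proof (induction n)
  case 0 then show ?case by (simp add: algebra_simps)
next
  case (Suc n)
  have "(\<Sum>j\<in>{1..<Suc (Suc n)}. q ^ j) = (\<Sum>j\<in>{1..<Suc n}. q ^ j) + q ^ Suc n"
    by (rule sum.atLeastLessThan_Suc) simp
  then show ?case using Suc by (simp add: algebra_simps)
qed

lemma geo: fixes q :: complex assumes "q \<noteq> 1" "k \<ge> 1"
  shows "(1 + q) / (1 - q) * (1 - q ^ k) = 1 + q ^ k + 2 * (\<Sum>j\<in>{1..<k}. q ^ j)"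
proof -
  obtain n where k: "k = Suc n" using assms(2) by (cases k) auto
  have "1 - q \<noteq> 0" using assms by simp
  then show ?thesis using geo_aux[of q n] unfolding k by (simp add: field_simps)
qed

lemma sum_half:
  fixes h :: "'a::ab_group_add \<Rightarrow> complex"
  assumes "finite R" "Rp \<subseteq> R" "\<And>\<alpha>. \<alpha> \<in> R \<Longrightarrow> - \<alpha> \<in> R"
    "\<And>\<alpha>. \<alpha> \<in> R \<Longrightarrow> (\<alpha> \<in> Rp) \<noteq> (- \<alpha> \<in> Rp)"
    "\<And>\<alpha>. \<alpha> \<in> R \<Longrightarrow> h (- \<alpha>) = h \<alpha>"
  shows "(\<Sum>\<alpha>\<in>R. h \<alpha>) = 2 * (\<Sum>\<alpha>\<in>Rp. h \<alpha>)"
proof -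
  have Rs: "R = Rp \<union> uminus ` Rp"
  proof
    show "R \<subseteq> Rp \<union> uminus ` Rp"
    proof
      fix a assume a: "a \<in> R"
      show "a \<in> Rp \<union> uminus ` Rp"
      proof (cases "a \<in> Rp")
        case False
        then have "- a \<in> Rp" using assms(4)[OF a] by blast
        then have "a \<in> uminus ` Rp" by (metis image_eqI minus_minus)
        then show ?thesis by blast
      qed simp
    qed
    show "Rp \<union> uminus ` Rp \<subseteq> R" using assms(2,3) by auto
  qed
  have disj: "Rp \<inter> uminus ` Rp = {}" using assms(2,4) by fastforce
  have fRp: "finite Rp" using assms(1,2) finite_subset by blast
  have "(\<Sum>\<alpha>\<in>R. h \<alpha>) = (\<Sum>\<alpha>\<in>Rp. h \<alpha>) + (\<Sum>\<alpha>\<in>uminus ` Rp. h \<alpha>)"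
    unfolding Rs by (rule sum.union_disjoint[OF fRp finite_imageI[OF fRp] disj])
  also have "(\<Sum>\<alpha>\<in>uminus ` Rp. h \<alpha>) = (\<Sum>\<alpha>\<in>Rp. h (- \<alpha>))"
    using sum.reindex[of uminus Rp h] by (simp add: inj_on_def comp_def)
  also have "\<dots> = (\<Sum>\<alpha>\<in>Rp. h \<alpha>)" using assms(2,5) by (intro sum.cong) auto
  finally show ?thesis by simp
qed

lemma sym_sum:
  fixes A :: "nat \<Rightarrow> complex"
  assumes sym: "\<And>j. 1 \<le> j \<Longrightarrow> j < k \<Longrightarrow> A (k - j) = A j"
  shows "(\<Sum>j\<in>{1..<k}. A j) = (\<Sum>l\<in>{1..k div 2}. (if 2 * l = k then 1 else 2) * A l)"
proof -
  let ?phi = "\<lambda>j. min j (k - j)"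
  have img: "?phi ` {1..<k} = {1..k div 2}"
  proof
    show "?phi ` {1..<k} \<subseteq> {1..k div 2}"
    proof (rule image_subsetI)
      fix j assume j: "j \<in> {1..<k}"
      have "2 * min j (k - j) \<le> k" using j by (simp add: min_def) linarith
      then have "min j (k - j) \<le> k div 2" by linarith
      moreover have "1 \<le> min j (k - j)" using j by auto
      ultimately show "min j (k - j) \<in> {1..k div 2}" by simp
    qed
    show "{1..k div 2} \<subseteq> ?phi ` {1..<k}"
    proof
      fix l assume l: "l \<in> {1..k div 2}"
      then have l1: "1 \<le> l" "2 * l \<le> k" by auto
      then have "?phi l = l" "l \<in> {1..<k}" by (auto simp: min_def)
      then show "l \<in> ?phi ` {1..<k}" by (metis image_eqI)
    qed
  qed
  have fib: "{j \<in> {1..<k}. ?phi j = l} = {l, k - l}" if l: "l \<in> {1..k div 2}" for l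
    using l by (intro set_eqI) (simp add: min_def, arith)
  have "(\<Sum>j\<in>{1..<k}. A j) = (\<Sum>l\<in>?phi ` {1..<k}. \<Sum>j\<in>{j \<in> {1..<k}. ?phi j = l}. A j)"
    by (rule sum.image_gen) simp
  also have "\<dots> = (\<Sum>l\<in>{1..k div 2}. (if 2 * l = k then 1 else 2) * A l)"
    unfolding img
  proof (rule sum.cong[OF refl])
    fix l assume l: "l \<in> {1..k div 2}"
    have l1: "1 \<le> l" "2 * l \<le> k" using l by auto
    then have "l < k" by linarith
    then have s: "A (k - l) = A l" using l1 sym[of l] by blast
    have "(\<Sum>j\<in>{l, k - l}. A j) = (if 2 * l = k then 1 else 2) * A l"
    proof (cases "2 * l = k")
      case True then have "k - l = l" by simp
      then show ?thesis using True by simp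
    next
      case False then have "k - l \<noteq> l" by simp
      then have "(\<Sum>j\<in>{l, k - l}. A j) = A l + A (k - l)" by (simp add: sum.insert)
      also have "\<dots> = 2 * A l" unfolding s by (rule mult_2[symmetric])
      finally show ?thesis using False by simp
    qed
    then show "(\<Sum>j\<in>{j \<in> {1..<k}. ?phi j = l}. A j) = (if 2 * l = k then 1 else 2) * A l"
      unfolding fib[OF l] .
  qed
  finally show ?thesis .
qed


lemma pairing:
  assumes rs: "root_system R" and b: "\<beta> \<in> R" and ne: "\<forall>\<gamma>\<in>R. expo (-\<gamma>) x \<noteq> 1"
    and kn: "\<nu> \<bullet> coroot \<beta> = real k" and k1: "k \<ge> 1"
  shows "(\<Sum>w\<in>weyl_group R. cfun x (w \<beta>) * expo (w \<nu>) x)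
    = (\<Sum>w\<in>weyl_group R. expo (w \<nu>) x) + (\<Sum>j\<in>{1..<k}. \<Sum>w\<in>weyl_group R. expo (w (\<nu> - real j *\<^sub>R \<beta>)) x)"
proof -
  let ?W = "weyl_group R"
  have fin: "finite ?W" by (rule W_finite[OF rs])
  have nz: "\<beta> \<noteq> 0" by (rule rs_nz[OF rs b])
  have r: "refl \<beta> \<in> ?W" by (rule W_refl[OF b])
  have rnu: "refl \<beta> \<nu> = \<nu> - real k *\<^sub>R \<beta>" unfolding refl_def kn ..
  have rb: "refl \<beta> \<beta> = - \<beta>" by (rule refl_self[OF nz])
  define S where "S = (\<Sum>w\<in>?W. cfun x (w \<beta>) * expo (w \<nu>) x)"
  define S' where "S' = (\<Sum>w\<in>?W. cfun x (w \<beta>) * expo (w (refl \<beta> \<nu>)) x)"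
  have "S = (\<Sum>w\<in>?W. cfun x ((w \<circ> refl \<beta>) \<beta>) * expo ((w \<circ> refl \<beta>) \<nu>) x)"
    unfolding S_def using W_reindex_right[OF rs r, of "\<lambda>w. cfun x (w \<beta>) * expo (w \<nu>) x"] by simp
  also have "\<dots> = (\<Sum>w\<in>?W. - (cfun x (w \<beta>) * expo (w (refl \<beta> \<nu>)) x))"
  proof (rule sum.cong[OF refl])
    fix w assume w: "w \<in> ?W"
    have "(w \<circ> refl \<beta>) \<beta> = - w \<beta>" using rb linear_neg[OF W_linear[OF rs w]] by simp
    moreover have "cfun x (- w \<beta>) = - cfun x (w \<beta>)"
      by (rule cfun_neg) (use ne W_R[OF rs w b] in blast)
    ultimately show "cfun x ((w \<circ> refl \<beta>) \<beta>) * expo ((w \<circ> refl \<beta>) \<nu>) x = - (cfun x (w \<beta>) * expo (w (refl \<beta> \<nu>)) x)"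
      by simp
  qed
  also have "\<dots> = - S'" unfolding S'_def by (simp add: sum_negf)
  finally have SS: "S = - S'" .
  have each: "cfun x (w \<beta>) * (expo (w \<nu>) x - expo (w (refl \<beta> \<nu>)) x)
      = expo (w \<nu>) x + expo (w (refl \<beta> \<nu>)) x + 2 * (\<Sum>j\<in>{1..<k}. expo (w (\<nu> - real j *\<^sub>R \<beta>)) x)"
    if w: "w \<in> ?W" for w
  proof -
    define q where "q = expo (- w \<beta>) x"
    have q1: "q \<noteq> 1" unfolding q_def using ne W_R[OF rs w b] by blast
    have lin: "linear w" by (rule W_linear[OF rs w])
    have e1: "expo (w (\<nu> - real j *\<^sub>R \<beta>)) x = expo (w \<nu>) x * q ^ j" for j
      unfolding q_def linear_diff[OF lin] linear_cmul[OF lin] by (rule expo_diff_nat)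
    have e2: "expo (w (refl \<beta> \<nu>)) x = expo (w \<nu>) x * q ^ k" unfolding rnu by (rule e1)
    have c: "cfun x (w \<beta>) = (1 + q) / (1 - q)" unfolding cfun_def q_def ..
    have "cfun x (w \<beta>) * (expo (w \<nu>) x - expo (w (refl \<beta> \<nu>)) x)
        = expo (w \<nu>) x * ((1 + q) / (1 - q) * (1 - q ^ k))"
      unfolding c e2 by (metis mult.left_commute mult.right_neutral right_diff_distrib)
    also have "\<dots> = expo (w \<nu>) x * (1 + q ^ k + 2 * (\<Sum>j\<in>{1..<k}. q ^ j))"
      using geo[OF q1 k1] by simp
    also have "\<dots> = expo (w \<nu>) x + expo (w \<nu>) x * q ^ k + 2 * (\<Sum>j\<in>{1..<k}. expo (w \<nu>) x * q ^ j)"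
      by (simp add: algebra_simps sum_distrib_left)
    finally show ?thesis unfolding e1 e2 .
  qed
  have Mr: "(\<Sum>w\<in>?W. expo (w (refl \<beta> \<nu>)) x) = (\<Sum>w\<in>?W. expo (w \<nu>) x)"
    using W_reindex_right[OF rs r, of "\<lambda>w. expo (w \<nu>) x"] by simp
  have "S + S = S - S'" using SS by simp
  also have "\<dots> = (\<Sum>w\<in>?W. cfun x (w \<beta>) * (expo (w \<nu>) x - expo (w (refl \<beta> \<nu>)) x))"
    unfolding S_def S'_def by (simp add: sum_subtractf right_diff_distrib)
  also have "\<dots> = (\<Sum>w\<in>?W. expo (w \<nu>) x + expo (w (refl \<beta> \<nu>)) x + 2 * (\<Sum>j\<in>{1..<k}. expo (w (\<nu> - real j *\<^sub>R \<beta>)) x))"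
    using each by (rule sum.cong[OF refl])
  also have "\<dots> = (\<Sum>w\<in>?W. expo (w \<nu>) x) + (\<Sum>w\<in>?W. expo (w (refl \<beta> \<nu>)) x)
      + 2 * (\<Sum>w\<in>?W. \<Sum>j\<in>{1..<k}. expo (w (\<nu> - real j *\<^sub>R \<beta>)) x)"
    by (simp add: sum.distrib sum_distrib_left)
  also have "(\<Sum>w\<in>?W. \<Sum>j\<in>{1..<k}. expo (w (\<nu> - real j *\<^sub>R \<beta>)) x)
      = (\<Sum>j\<in>{1..<k}. \<Sum>w\<in>?W. expo (w (\<nu> - real j *\<^sub>R \<beta>)) x)"
    by (rule sum.swap)
  finally have "S + S = 2 * ((\<Sum>w\<in>?W. expo (w \<nu>) x) + (\<Sum>j\<in>{1..<k}. \<Sum>w\<in>?W. expo (w (\<nu> - real j *\<^sub>R \<beta>)) x))"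
    unfolding Mr by simp
  then have "2 * S = 2 * ((\<Sum>w\<in>?W. expo (w \<nu>) x) + (\<Sum>j\<in>{1..<k}. \<Sum>w\<in>?W. expo (w (\<nu> - real j *\<^sub>R \<beta>)) x))"
    by (simp only: mult_2)
  then show ?thesis unfolding S_def[symmetric] by (rule mult_left_cancel[THEN iffD1, rotated]) simp
qed


lemma M_refl:
  assumes rs: "root_system R" and a: "\<alpha> \<in> R"
  shows "(\<Sum>w\<in>weyl_group R. expo (w (refl \<alpha> \<nu>)) x) = (\<Sum>w\<in>weyl_group R. expo (w \<nu>) x)"
  using W_reindex_right[OF rs W_refl[OF a], of "\<lambda>w. expo (w \<nu>) x"] by simp

lemma W_inj: assumes rs: "root_system R" and w: "w \<in> weyl_group R" shows "inj w"
proof -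
  obtain w' where "w' \<circ> w = id" using W_inv[OF rs w] by blast
  then show ?thesis by (metis inj_on_id inj_on_imageI2)
qed

lemma sum_R_reindex:
  assumes rs: "root_system R" and w: "w \<in> weyl_group R"
  shows "(\<Sum>\<alpha>\<in>R. F \<alpha>) = (\<Sum>\<beta>\<in>R. F (w \<beta>))"
proof -
  have "(\<Sum>\<alpha>\<in>R. F \<alpha>) = (\<Sum>\<alpha>\<in>w ` R. F \<alpha>)" using W_image_R[OF rs w] by simp
  also have "\<dots> = (\<Sum>\<beta>\<in>R. F (w \<beta>))"
    using sum.reindex[of w R F] inj_on_subset[OF W_inj[OF rs w]] by simp
  finally show ?thesis .
qed

lemma coroot_inner: "lam \<bullet> coroot \<beta> = 2 * (lam \<bullet> \<beta>) / (\<beta> \<bullet> \<beta>)"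
  unfolding coroot_def by simp

theorem mainTheorem4:
  fixes R Rp :: "'a::euclidean_space set" and g :: "'a \<Rightarrow> real" and lam x :: 'a
  assumes "root_system R" and "irreducible_rs R" and "positive_system R Rp"
    and "\<forall>w\<in>weyl_group R. \<forall>\<alpha>\<in>R. g (w \<alpha>) = g \<alpha>"
    and "lam \<in> dominant_weights R Rp"
    and "\<forall>\<alpha>\<in>Rp. expo (-\<alpha>) x \<noteq> 1"
  shows "hyp_D Rp g (orbit_sum R lam) x =
     complex_of_real ((lam + rho_g Rp g) \<bullet> (lam + rho_g Rp g) - rho_g Rp g \<bullet> rho_g Rp g)
       * ev (orbit_sum R lam) x
     + complex_of_real (1 / real (card (stabilizer R lam)))
       * (\<Sum>\<alpha>\<in>Rp. complex_of_real (g \<alpha> * (lam \<bullet> \<alpha>))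
           * (\<Sum>l\<in>{1..nat \<lfloor>(lam \<bullet> coroot \<alpha>) / 2\<rfloor>}.
                complex_of_real (real (card (stabilizer R (lam - real l *\<^sub>R \<alpha>)))
                  * real (card {lam - real l *\<^sub>R \<alpha>, refl \<alpha> (lam - real l *\<^sub>R \<alpha>)}))
                * ev (orbit_sum R (lam - real l *\<^sub>R \<alpha>)) x))"
proof -
  note rs = assms(1)
  let ?W = "weyl_group R"
  let ?O = "(\<lambda>w. w lam) ` ?W"
  define M where "M \<nu> = (\<Sum>w\<in>?W. expo (w \<nu>) x)" for \<nu>
  define m where "m = ev (orbit_sum R lam) x"
  define s where "s = card (stabilizer R lam)"
  define cs where "cs = complex_of_real (1 / real s)"
  have finW: "finite ?W" by (rule W_finite[OF rs])
  have finR: "finite R" using rs unfolding root_system_def by auto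
  obtain v where v: "\<forall>\<alpha>\<in>R. \<alpha> \<bullet> v \<noteq> 0" and Rp: "Rp = {\<alpha>\<in>R. \<alpha> \<bullet> v > 0}"
    using assms(3) unfolding positive_system_def by blast
  have RpR: "Rp \<subseteq> R" using Rp by auto
  have Rneg: "\<And>\<alpha>. \<alpha> \<in> R \<Longrightarrow> - \<alpha> \<in> R" using rs_neg[OF rs] .
  have Rx: "\<And>\<alpha>. \<alpha> \<in> R \<Longrightarrow> (\<alpha> \<in> Rp) \<noteq> (- \<alpha> \<in> Rp)"
  proof -
    fix \<alpha> assume a: "\<alpha> \<in> R"
    have "\<alpha> \<bullet> v \<noteq> 0" using v a by blast
    then show "(\<alpha> \<in> Rp) \<noteq> (- \<alpha> \<in> Rp)" using a Rneg[OF a] unfolding Rp by auto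
  qed
  have ne: "\<forall>\<gamma>\<in>R. expo (-\<gamma>) x \<noteq> 1"
  proof
    fix \<gamma> assume c: "\<gamma> \<in> R"
    show "expo (-\<gamma>) x \<noteq> 1"
    proof (cases "\<gamma> \<in> Rp")
      case True then show ?thesis using assms(6) by blast
    next
      case False
      then have "- \<gamma> \<in> Rp" using Rx[OF c] by blast
      then have "expo \<gamma> x \<noteq> 1" using assms(6) by fastforce
      then show ?thesis using expo_neg[of \<gamma> x] by auto
    qed
  qed
  have ginv: "\<And>\<alpha>. \<alpha> \<in> R \<Longrightarrow> g (- \<alpha>) = g \<alpha>"
    using assms(4) W_refl refl_self rs_nz[OF rs] by metis
  have ginvW: "\<And>w \<alpha>. w \<in> ?W \<Longrightarrow> \<alpha> \<in> R \<Longrightarrow> g (w \<alpha>) = g \<alpha>" using assms(4) by blast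
  have lamZ: "\<And>\<alpha>. \<alpha> \<in> R \<Longrightarrow> lam \<bullet> coroot \<alpha> \<in> \<int>"
    using assms(5) unfolding dominant_weights_def weight_lattice_def by blast
  have dom: "\<And>\<alpha>. \<alpha> \<in> Rp \<Longrightarrow> lam \<bullet> coroot \<alpha> \<ge> 0"
    using assms(5) unfolding dominant_weights_def by blast
  have spos: "s > 0" unfolding s_def by (rule stab_pos[OF rs])
  have Mev: "M \<nu> = of_nat (card (stabilizer R \<nu>)) * ev (orbit_sum R \<nu>) x" for \<nu>
    unfolding M_def ev_orbit[OF rs] by (rule orbit_stab[OF rs])
  have Mlam: "M lam = of_nat s * m" unfolding m_def s_def by (rule Mev)
  have kdef: "\<exists>k::nat. lam \<bullet> coroot \<alpha> = real k \<and> nat \<lfloor>(lam \<bullet> coroot \<alpha>) / 2\<rfloor> = k div 2"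
    if a: "\<alpha> \<in> Rp" for \<alpha>
  proof -
    obtain z where z: "lam \<bullet> coroot \<alpha> = of_int z" using lamZ[of \<alpha>] a RpR Ints_cases by blast
    have z0: "z \<ge> 0" using dom[OF a] z by simp
    have "lam \<bullet> coroot \<alpha> = real (nat z)" using z z0 by simp
    moreover have "nat \<lfloor>(lam \<bullet> coroot \<alpha>) / 2\<rfloor> = nat z div 2"
    proof -
      have "\<lfloor>real_of_int z / 2\<rfloor> = z div 2" using floor_divide_of_int_eq[where 'a=real, of z 2] by simp
      then show ?thesis unfolding z using z0 by (simp add: nat_div_distrib)
    qed
    ultimately show ?thesis by blast
  qed
  have part1: "(\<Sum>b\<in>Basis. ev (pd b (pd b (orbit_sum R lam))) x) = complex_of_real (lam \<bullet> lam) * m"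
  proof -
    have "(\<Sum>b\<in>Basis. ev (pd b (pd b (orbit_sum R lam))) x)
        = (\<Sum>b\<in>Basis. \<Sum>\<mu>\<in>?O. complex_of_real ((\<mu> \<bullet> b) * (\<mu> \<bullet> b)) * expo \<mu> x)"
      by (simp add: ev_pd2_orbit[OF rs])
    also have "\<dots> = (\<Sum>\<mu>\<in>?O. (\<Sum>b\<in>Basis. complex_of_real ((\<mu> \<bullet> b) * (\<mu> \<bullet> b))) * expo \<mu> x)"
      by (subst sum.swap) (simp add: sum_distrib_right)
    also have "\<dots> = (\<Sum>\<mu>\<in>?O. complex_of_real (lam \<bullet> lam) * expo \<mu> x)"
    proof (rule sum.cong[OF refl])
      fix \<mu> assume "\<mu> \<in> ?O"
      then obtain w where w: "w \<in> ?W" "\<mu> = w lam" by blast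
      have "(\<Sum>b\<in>Basis. complex_of_real ((\<mu> \<bullet> b) * (\<mu> \<bullet> b))) = complex_of_real (\<mu> \<bullet> \<mu>)"
        unfolding of_real_sum[symmetric] using euclidean_inner[of \<mu> \<mu>] by simp
      also have "\<mu> \<bullet> \<mu> = lam \<bullet> lam" using w W_inner[OF rs w(1)] by simp
      finally show "(\<Sum>b\<in>Basis. complex_of_real ((\<mu> \<bullet> b) * (\<mu> \<bullet> b))) * expo \<mu> x = complex_of_real (lam \<bullet> lam) * expo \<mu> x"
        by simp
    qed
    also have "\<dots> = complex_of_real (lam \<bullet> lam) * m"
      unfolding m_def ev_orbit[OF rs] by (simp add: sum_distrib_left)
    finally show ?thesis .
  qed
  define h where "h \<alpha> = complex_of_real (g \<alpha>) * cfun x \<alpha> * (\<Sum>w\<in>?W. complex_of_real (w lam \<bullet> \<alpha>) * expo (w lam) x)" for \<alpha>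
  have pd_ev: "ev (pd \<alpha> (orbit_sum R lam)) x = cs * (\<Sum>w\<in>?W. complex_of_real (w lam \<bullet> \<alpha>) * expo (w lam) x)" for \<alpha>
  proof -
    have "(\<Sum>w\<in>?W. complex_of_real (w lam \<bullet> \<alpha>) * expo (w lam) x) = of_nat s * ev (pd \<alpha> (orbit_sum R lam)) x"
      unfolding ev_pd_orbit[OF rs] s_def
      by (rule orbit_stab[OF rs, of "\<lambda>\<mu>. complex_of_real (\<mu> \<bullet> \<alpha>) * expo \<mu> x"])
    then show ?thesis unfolding cs_def using spos by simp
  qed
  have part2: "(\<Sum>\<alpha>\<in>Rp. complex_of_real (g \<alpha>) * ((1 + expo (-\<alpha>) x) / (1 - expo (-\<alpha>) x)) * ev (pd \<alpha> (orbit_sum R lam)) x)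
      = cs * (\<Sum>\<alpha>\<in>Rp. h \<alpha>)"
    unfolding cfun_def[symmetric] pd_ev h_def by (simp add: sum_distrib_left mult_ac)
  define G where "G \<beta> = complex_of_real (g \<beta> * (lam \<bullet> \<beta>)) * (\<Sum>w\<in>?W. cfun x (w \<beta>) * expo (w lam) x)" for \<beta>
  have hR: "(\<Sum>\<alpha>\<in>R. h \<alpha>) = 2 * (\<Sum>\<alpha>\<in>Rp. h \<alpha>)"
  proof (rule sum_half[OF finR RpR Rneg Rx])
    fix \<alpha> assume a: "\<alpha> \<in> R"
    have c: "cfun x (-\<alpha>) = - cfun x \<alpha>" using cfun_neg ne a by blast
    show "h (- \<alpha>) = h \<alpha>" unfolding h_def c ginv[OF a]
      by (simp add: sum_negf)
  qed
  have GR: "(\<Sum>\<beta>\<in>R. G \<beta>) = 2 * (\<Sum>\<beta>\<in>Rp. G \<beta>)"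
  proof (rule sum_half[OF finR RpR Rneg Rx])
    fix \<beta> assume b: "\<beta> \<in> R"
    have "cfun x (w (- \<beta>)) = - cfun x (w \<beta>)" if w: "w \<in> ?W" for w
      using cfun_neg[of "w \<beta>" x] ne W_R[OF rs w b] linear_neg[OF W_linear[OF rs w]] by simp
    then have "(\<Sum>w\<in>?W. cfun x (w (- \<beta>)) * expo (w lam) x) = - (\<Sum>w\<in>?W. cfun x (w \<beta>) * expo (w lam) x)"
      by (simp add: sum_negf)
    then show "G (- \<beta>) = G \<beta>" unfolding G_def ginv[OF b] by simp
  qed
  have hG: "(\<Sum>\<alpha>\<in>R. h \<alpha>) = (\<Sum>\<beta>\<in>R. G \<beta>)"
  proof -
    have "(\<Sum>\<alpha>\<in>R. h \<alpha>) = (\<Sum>w\<in>?W. \<Sum>\<alpha>\<in>R. complex_of_real (g \<alpha>) * cfun x \<alpha> * complex_of_real (w lam \<bullet> \<alpha>) * expo (w lam) x)"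
      unfolding h_def by (subst sum.swap) (simp add: sum_distrib_left mult_ac)
    also have "\<dots> = (\<Sum>w\<in>?W. \<Sum>\<beta>\<in>R. complex_of_real (g \<beta> * (lam \<bullet> \<beta>)) * (cfun x (w \<beta>) * expo (w lam) x))"
    proof (rule sum.cong[OF refl])
      fix w assume w: "w \<in> ?W"
      have "(\<Sum>\<alpha>\<in>R. complex_of_real (g \<alpha>) * cfun x \<alpha> * complex_of_real (w lam \<bullet> \<alpha>) * expo (w lam) x)
          = (\<Sum>\<beta>\<in>R. complex_of_real (g (w \<beta>)) * cfun x (w \<beta>) * complex_of_real (w lam \<bullet> w \<beta>) * expo (w lam) x)"
        by (rule sum_R_reindex[OF rs w])
      also have "\<dots> = (\<Sum>\<beta>\<in>R. complex_of_real (g \<beta> * (lam \<bullet> \<beta>)) * (cfun x (w \<beta>) * expo (w lam) x))"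
        using ginvW[OF w] W_inner[OF rs w] by (intro sum.cong) (auto simp: mult_ac)
      finally show "(\<Sum>\<alpha>\<in>R. complex_of_real (g \<alpha>) * cfun x \<alpha> * complex_of_real (w lam \<bullet> \<alpha>) * expo (w lam) x)
          = (\<Sum>\<beta>\<in>R. complex_of_real (g \<beta> * (lam \<bullet> \<beta>)) * (cfun x (w \<beta>) * expo (w lam) x))" .
    qed
    also have "\<dots> = (\<Sum>\<beta>\<in>R. G \<beta>)"
      unfolding G_def by (subst sum.swap) (simp add: sum_distrib_left)
    finally show ?thesis .
  qed
  have hG2: "(\<Sum>\<alpha>\<in>Rp. h \<alpha>) = (\<Sum>\<beta>\<in>Rp. G \<beta>)" using hR GR hG by simp
  define T where "T \<alpha> = M lam + (\<Sum>j\<in>{1..<nat \<lfloor>lam \<bullet> coroot \<alpha>\<rfloor>}. M (lam - real j *\<^sub>R \<alpha>))" for \<alpha>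
  have GT: "G \<beta> = complex_of_real (g \<beta> * (lam \<bullet> \<beta>)) * T \<beta>" if b: "\<beta> \<in> Rp" for \<beta>
  proof -
    obtain k where k: "lam \<bullet> coroot \<beta> = real k" using kdef[OF b] by blast
    have bR: "\<beta> \<in> R" using b RpR by blast
    have nk: "nat \<lfloor>lam \<bullet> coroot \<beta>\<rfloor> = k" unfolding k by simp
    show ?thesis
    proof (cases "k \<ge> 1")
      case True
      show ?thesis unfolding G_def T_def nk M_def
        using pairing[OF rs bR ne k True] by simp
    next
      case False
      then have "k = 0" by simp
      then have "lam \<bullet> \<beta> = 0" using k rs_nz[OF rs bR] unfolding coroot_inner by simp
      then show ?thesis unfolding G_def by simp
    qed
  qed
  have LHS: "hyp_D Rp g (orbit_sum R lam) x = complex_of_real (lam \<bullet> lam) * m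
      + cs * (\<Sum>\<beta>\<in>Rp. complex_of_real (g \<beta> * (lam \<bullet> \<beta>)) * T \<beta>)"
    unfolding hyp_D_def part1 part2 hG2 using GT by simp
  have inner_sum: "(\<Sum>l\<in>{1..nat \<lfloor>(lam \<bullet> coroot \<alpha>) / 2\<rfloor>}.
                complex_of_real (real (card (stabilizer R (lam - real l *\<^sub>R \<alpha>)))
                  * real (card {lam - real l *\<^sub>R \<alpha>, refl \<alpha> (lam - real l *\<^sub>R \<alpha>)}))
                * ev (orbit_sum R (lam - real l *\<^sub>R \<alpha>)) x)
        = (\<Sum>j\<in>{1..<nat \<lfloor>lam \<bullet> coroot \<alpha>\<rfloor>}. M (lam - real j *\<^sub>R \<alpha>))" if a: "\<alpha> \<in> Rp" for \<alpha>
  proof -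
    obtain k where k: "lam \<bullet> coroot \<alpha> = real k" and k2: "nat \<lfloor>(lam \<bullet> coroot \<alpha>) / 2\<rfloor> = k div 2"
      using kdef[OF a] by blast
    have aR: "\<alpha> \<in> R" using a RpR by blast
    have nz: "\<alpha> \<noteq> 0" by (rule rs_nz[OF rs aR])
    have nk: "nat \<lfloor>lam \<bullet> coroot \<alpha>\<rfloor> = k" unfolding k by simp
    have rl: "refl \<alpha> (lam - real l *\<^sub>R \<alpha>) = lam - real (k - l) *\<^sub>R \<alpha>" if l: "l \<le> k" for l
    proof -
      have c: "(lam - real l *\<^sub>R \<alpha>) \<bullet> coroot \<alpha> = real k - 2 * real l"
        using k coroot_inner_self[OF nz] by (simp add: inner_diff_left)
      have "refl \<alpha> (lam - real l *\<^sub>R \<alpha>) = lam - real l *\<^sub>R \<alpha> - (real k - 2 * real l) *\<^sub>R \<alpha>"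
        unfolding refl_def c ..
      also have "\<dots> = lam - (real k - real l) *\<^sub>R \<alpha>" by (simp add: algebra_simps scaleR_2 flip: scaleR_scaleR)
      also have "real k - real l = real (k - l)" using l by (simp add: of_nat_diff)
      finally show ?thesis .
    qed
    have card2: "real (card {lam - real l *\<^sub>R \<alpha>, refl \<alpha> (lam - real l *\<^sub>R \<alpha>)}) = (if 2 * l = k then 1 else 2)"
      if l: "l \<le> k" for l
    proof -
      have "(lam - real l *\<^sub>R \<alpha> = lam - real (k - l) *\<^sub>R \<alpha>) \<longleftrightarrow> 2 * l = k"
      proof -
        have "(lam - real l *\<^sub>R \<alpha> = lam - real (k - l) *\<^sub>R \<alpha>) \<longleftrightarrow> real l = real (k - l)"
          using nz by (simp add: scaleR_cancel_right)
        also have "\<dots> \<longleftrightarrow> 2 * l = k" using l by linarith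
        finally show ?thesis .
      qed
      then show ?thesis unfolding rl[OF l] by auto
    qed
    have "(\<Sum>l\<in>{1..nat \<lfloor>(lam \<bullet> coroot \<alpha>) / 2\<rfloor>}.
                complex_of_real (real (card (stabilizer R (lam - real l *\<^sub>R \<alpha>)))
                  * real (card {lam - real l *\<^sub>R \<alpha>, refl \<alpha> (lam - real l *\<^sub>R \<alpha>)}))
                * ev (orbit_sum R (lam - real l *\<^sub>R \<alpha>)) x)
        = (\<Sum>l\<in>{1..k div 2}. (if 2 * l = k then 1 else 2) * M (lam - real l *\<^sub>R \<alpha>))"
      unfolding k2
    proof (rule sum.cong[OF refl])
      fix l assume l: "l \<in> {1..k div 2}"
      then have lk: "l \<le> k" by auto
      show "complex_of_real (real (card (stabilizer R (lam - real l *\<^sub>R \<alpha>)))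
                  * real (card {lam - real l *\<^sub>R \<alpha>, refl \<alpha> (lam - real l *\<^sub>R \<alpha>)}))
                * ev (orbit_sum R (lam - real l *\<^sub>R \<alpha>)) x = (if 2 * l = k then 1 else 2) * M (lam - real l *\<^sub>R \<alpha>)"
        unfolding Mev card2[OF lk] by simp
    qed
    also have "\<dots> = (\<Sum>j\<in>{1..<k}. M (lam - real j *\<^sub>R \<alpha>))"
    proof (rule sym_sum[symmetric])
      fix j assume j: "1 \<le> j" "j < k"
      have "M (lam - real (k - j) *\<^sub>R \<alpha>) = M (refl \<alpha> (lam - real j *\<^sub>R \<alpha>))" using rl[of j] j by simp
      also have "\<dots> = M (lam - real j *\<^sub>R \<alpha>)" unfolding M_def by (rule M_refl[OF rs aR])
      finally show "M (lam - real (k - j) *\<^sub>R \<alpha>) = M (lam - real j *\<^sub>R \<alpha>)" .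
    qed
    finally show ?thesis unfolding nk .
  qed
  have rho: "(lam + rho_g Rp g) \<bullet> (lam + rho_g Rp g) - rho_g Rp g \<bullet> rho_g Rp g
      = lam \<bullet> lam + (\<Sum>\<alpha>\<in>Rp. g \<alpha> * (lam \<bullet> \<alpha>))"
    unfolding rho_g_def by (simp add: inner_add_left inner_add_right inner_sum_right inner_commute algebra_simps)
  have mpart: "complex_of_real (\<Sum>\<alpha>\<in>Rp. g \<alpha> * (lam \<bullet> \<alpha>)) * m = cs * (\<Sum>\<alpha>\<in>Rp. complex_of_real (g \<alpha> * (lam \<bullet> \<alpha>)) * M lam)"
  proof -
    have "(\<Sum>\<alpha>\<in>Rp. complex_of_real (g \<alpha> * (lam \<bullet> \<alpha>)) * M lam)
        = of_nat s * ((\<Sum>\<alpha>\<in>Rp. complex_of_real (g \<alpha> * (lam \<bullet> \<alpha>))) * m)"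
      unfolding Mlam by (simp add: sum_distrib_right sum_distrib_left mult_ac)
    moreover have "cs * of_nat s = 1" unfolding cs_def using spos by simp
    ultimately show ?thesis by (simp add: of_real_sum mult.assoc[symmetric])
  qed
  have RHS: "complex_of_real ((lam + rho_g Rp g) \<bullet> (lam + rho_g Rp g) - rho_g Rp g \<bullet> rho_g Rp g)
       * ev (orbit_sum R lam) x
     + complex_of_real (1 / real (card (stabilizer R lam)))
       * (\<Sum>\<alpha>\<in>Rp. complex_of_real (g \<alpha> * (lam \<bullet> \<alpha>))
           * (\<Sum>l\<in>{1..nat \<lfloor>(lam \<bullet> coroot \<alpha>) / 2\<rfloor>}.
                complex_of_real (real (card (stabilizer R (lam - real l *\<^sub>R \<alpha>)))
                  * real (card {lam - real l *\<^sub>R \<alpha>, refl \<alpha> (lam - real l *\<^sub>R \<alpha>)}))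
                * ev (orbit_sum R (lam - real l *\<^sub>R \<alpha>)) x))
     = complex_of_real (lam \<bullet> lam) * m
      + cs * (\<Sum>\<beta>\<in>Rp. complex_of_real (g \<beta> * (lam \<bullet> \<beta>)) * T \<beta>)"
  proof -
    have "(\<Sum>\<alpha>\<in>Rp. complex_of_real (g \<alpha> * (lam \<bullet> \<alpha>))
           * (\<Sum>l\<in>{1..nat \<lfloor>(lam \<bullet> coroot \<alpha>) / 2\<rfloor>}.
                complex_of_real (real (card (stabilizer R (lam - real l *\<^sub>R \<alpha>)))
                  * real (card {lam - real l *\<^sub>R \<alpha>, refl \<alpha> (lam - real l *\<^sub>R \<alpha>)}))
                * ev (orbit_sum R (lam - real l *\<^sub>R \<alpha>)) x))
        = (\<Sum>\<alpha>\<in>Rp. complex_of_real (g \<alpha> * (lam \<bullet> \<alpha>)) * (\<Sum>j\<in>{1..<nat \<lfloor>lam \<bullet> coroot \<alpha>\<rfloor>}. M (lam - real j *\<^sub>R \<alpha>)))"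
      using inner_sum by (intro sum.cong) auto
    moreover have "(\<Sum>\<beta>\<in>Rp. complex_of_real (g \<beta> * (lam \<bullet> \<beta>)) * T \<beta>)
        = (\<Sum>\<alpha>\<in>Rp. complex_of_real (g \<alpha> * (lam \<bullet> \<alpha>)) * M lam)
          + (\<Sum>\<alpha>\<in>Rp. complex_of_real (g \<alpha> * (lam \<bullet> \<alpha>)) * (\<Sum>j\<in>{1..<nat \<lfloor>lam \<bullet> coroot \<alpha>\<rfloor>}. M (lam - real j *\<^sub>R \<alpha>)))"
      unfolding T_def by (simp add: distrib_left sum.distrib)
    ultimately show ?thesis
      unfolding rho m_def[symmetric] s_def[symmetric] cs_def[symmetric]
      using mpart by (simp add: distrib_left distrib_right)
  qed
  show ?thesis unfolding LHS RHS ..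
qed

end
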